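(* Let $n\ge1$ and let $X_1,\dots,X_n,Y_1,\dots,Y_n$ be algebraically independent indeterminates. Then $$\det_{1\le i,j\le n}\left(X_i^j-Y_i^j\right)=\sum_{\sigma\in S_n}\operatorname{sgn}(\sigma)\prod_{1\le i\le j\le n}\left(X_{\sigma(j)}-Y_{\sigma(i)}\right).$$ *)

theory Defs
  imports "Jordan_Normal_Form.Determinant"
begin

end

theory Submission
  imports Defs "HOL-Computational_Algebra.Polynomial"
begin


lemma prod_lin_coeff:
  fixes y :: "nat \<Rightarrow> 'a::comm_ring_1"
  shows "finite S \<Longrightarrow> degree (\<Prod>b\<in>S. [:-y b,1:]) \<le> card S \<and> coeff (\<Prod>b\<in>S. [:-y b,1:]) (card S) = 1"
proof (induction S rule: finite_induct)
  case empty
  then show ?case by simp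
next
  case (insert a S)
  let ?p = "\<Prod>b\<in>S. [:-y b,1:]"
  have e: "(\<Prod>b\<in>insert a S. [:-y b,1:]) = smult (-y a) ?p + pCons 0 ?p"
    using insert by (simp add: mult_pCons_left)
  have d: "degree (smult (-y a) ?p + pCons 0 ?p) \<le> Suc (card S)"
  proof (rule degree_add_le)
    show "degree (smult (-y a) ?p) \<le> Suc (card S)"
      using degree_smult_le[of "-y a" ?p] insert.IH by linarith
    show "degree (pCons 0 ?p) \<le> Suc (card S)"
      using degree_pCons_le[of 0 ?p] insert.IH by linarith
  qed
  have "coeff ?p (Suc (card S)) = 0" using insert.IH by (simp add: coeff_eq_0)
  then show ?case using e d insert by simp
qed

lemma poly_key:
  fixes y :: "nat \<Rightarrow> 'a::comm_ring_1"
  shows "\<exists>c. \<forall>t. (\<Prod>b<Suc n. (t - y b)) = t^(Suc n) - (\<Sum>k\<le>n. c k * t^k)"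
proof -
  define P where "P = (\<Prod>b<Suc n. [:-y b,1:])"
  define q where "q = monom 1 (Suc n) - P"
  have PP: "degree P \<le> Suc n \<and> coeff P (Suc n) = 1"
    using prod_lin_coeff[of "{..<Suc n}" y] unfolding P_def by simp
  have dq: "degree q \<le> n"
  proof (rule degree_le)
    show "\<forall>i>n. coeff q i = 0"
    proof (intro allI impI)
      fix i assume "n < i"
      then consider "i = Suc n" | "i > Suc n" by linarith
      then show "coeff q i = 0"
        using PP by cases (auto simp: q_def coeff_monom coeff_eq_0)
    qed
  qed
  have pq: "poly q t = (\<Sum>k\<le>n. coeff q k * t^k)" for t
  proof -
    have "poly q t = (\<Sum>k\<le>degree q. coeff q k * t^k)" by (rule poly_altdef)
    also have "\<dots> = (\<Sum>k\<le>n. coeff q k * t^k)"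
      by (rule sum.mono_neutral_left) (use dq in \<open>auto simp: coeff_eq_0\<close>)
    finally show ?thesis .
  qed
  have "(\<Prod>b<Suc n. (t - y b)) = t^(Suc n) - (\<Sum>k\<le>n. coeff q k * t^k)" for t
  proof -
    have "(\<Prod>b<Suc n. (t - y b)) = poly P t" unfolding P_def by (simp add: poly_prod algebra_simps)
    also have "\<dots> = poly (monom 1 (Suc n)) t - poly q t" unfolding q_def by simp
    finally show ?thesis by (simp add: pq poly_monom algebra_simps)
  qed
  then show ?thesis by blast
qed

definition RR :: "nat \<Rightarrow> (nat \<Rightarrow> 'a) \<Rightarrow> (nat \<Rightarrow> 'a) \<Rightarrow> 'a::comm_ring_1" where
  "RR n x y = (\<Sum>p | p permutes {0..<n}. signof p *
       (\<Prod>j\<in>{0..<n}. \<Prod>i\<in>{0..j}. (x (p j) - y (p i))))"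

definition MM :: "nat \<Rightarrow> (nat \<Rightarrow> 'a) \<Rightarrow> (nat \<Rightarrow> 'a) \<Rightarrow> 'a::comm_ring_1 mat" where
  "MM n x y = mat n n (\<lambda>(i, j). x i ^ (j + 1) - y i ^ (j + 1))"

lemma det_step:
  fixes x y :: "nat \<Rightarrow> 'a::comm_ring_1"
  shows "det (MM (Suc n) x y) = (\<Sum>a<Suc n. (\<Prod>b<Suc n. (x a - y b)) *
     ((-1)^(a+n) * det (MM n (x \<circ> insert_index a) (y \<circ> insert_index a))))"
proof -
  obtain c where c: "\<And>t. (\<Prod>b<Suc n. (t - y b)) = t^(Suc n) - (\<Sum>k\<le>n. c k * t^k)"
    using poly_key[where n=n and y=y] by blast
  have lastcol: "(\<Prod>b<Suc n. (x a - y b)) = (x a^(Suc n) - y a^(Suc n))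
      - (\<Sum>k<n. c (Suc k) * (x a^(Suc k) - y a^(Suc k)))" if a: "a < Suc n" for a
  proof -
    have "(\<Prod>b<Suc n. (y a - y b)) = 0" using a by (intro prod_zero) auto
    hence ya: "y a^(Suc n) = (\<Sum>k\<le>n. c k * y a^k)" using c[of "y a"] by simp
    have "(\<Sum>k\<le>n. c k * x a^k) - (\<Sum>k\<le>n. c k * y a^k) = (\<Sum>k\<le>n. c k * (x a^k - y a^k))"
      by (simp add: sum_subtractf algebra_simps)
    also have "\<dots> = (\<Sum>k<n. c (Suc k) * (x a^(Suc k) - y a^(Suc k)))"
      by (simp add: sum.atMost_shift)
    finally show ?thesis using c[of "x a"] ya by (simp add: algebra_simps)
  qed
  define A where "A = MM (Suc n) x y"
  define E :: "'a mat" where "E = mat (Suc n) (Suc n) (\<lambda>(k,j). if j = n then (if k = n then 1 else - c (Suc k)) else (if k = j then 1 else 0))"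
  define B where "B = mat (Suc n) (Suc n) (\<lambda>(i,j). if j = n then (\<Prod>b<Suc n. (x i - y b)) else x i^(j+1) - y i^(j+1))"
  have Ac: "A \<in> carrier_mat (Suc n) (Suc n)" and Ec: "E \<in> carrier_mat (Suc n) (Suc n)"
    and Bc: "B \<in> carrier_mat (Suc n) (Suc n)" by (auto simp: A_def MM_def E_def B_def)
  have AE: "A * E = B"
  proof (rule eq_matI)
    fix i j assume i: "i < dim_row B" and j: "j < dim_col B"
    hence i: "i < Suc n" and j: "j < Suc n" by (auto simp: B_def)
    have "(A * E) $$ (i, j) = (\<Sum>k\<in>{0..<Suc n}. A $$ (i,k) * E $$ (k,j))"
      using i j Ac Ec by (simp add: scalar_prod_def)
    also have "\<dots> = B $$ (i,j)"
    proof (cases "j = n")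
      case True
      have "(\<Sum>k\<in>{0..<Suc n}. A $$ (i,k) * E $$ (k,j)) = (\<Sum>k\<in>{0..<n}. A $$ (i,k) * E $$ (k,j)) + A $$ (i,n) * E $$ (n,j)"
        by (simp add: True)
      also have "(\<Sum>k\<in>{0..<n}. A $$ (i,k) * E $$ (k,j)) = - (\<Sum>k<n. c (Suc k) * (x i^(Suc k) - y i^(Suc k)))"
        unfolding atLeast0LessThan sum_negf[symmetric]
        by (rule sum.cong) (use i in \<open>auto simp: True A_def E_def MM_def algebra_simps\<close>)
      finally show ?thesis using lastcol[OF i] i True by (simp add: A_def E_def MM_def B_def)
    next
      case False
      have "(\<Sum>k\<in>{0..<Suc n}. A $$ (i,k) * E $$ (k,j)) = (\<Sum>k\<in>{0..<Suc n}. if k = j then A $$ (i,k) else 0)"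
        by (rule sum.cong) (use False j in \<open>auto simp: E_def\<close>)
      also have "\<dots> = A $$ (i,j)" using j by simp
      finally show ?thesis using False i j by (simp add: A_def B_def MM_def)
    qed
    finally show "(A * E) $$ (i, j) = B $$ (i, j)" .
  qed (use Ac Ec Bc in auto)
  have dE: "det E = 1"
  proof -
    have ut: "upper_triangular E" by (auto simp: upper_triangular_def E_def)
    have "diag_mat E = map (\<lambda>_. 1) [0..<Suc n]"
      unfolding diag_mat_def by (rule map_cong) (auto simp: E_def)
    then show ?thesis using det_upper_triangular[OF ut Ec] by (simp add: map_replicate_const)
  qed
  have "det A = det B" using det_mult[OF Ac Ec] AE dE by simp
  also have "det B = (\<Sum>i<Suc n. B $$ (i,n) * cofactor B i n)"
    by (rule laplace_expansion_column[OF Bc]) simp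
  also have "\<dots> = (\<Sum>a<Suc n. (\<Prod>b<Suc n. (x a - y b)) *
     ((-1)^(a+n) * det (MM n (x \<circ> insert_index a) (y \<circ> insert_index a))))"
  proof (rule sum.cong[OF refl])
    fix a assume a: "a \<in> {..<Suc n}"
    have "mat_delete B a n = MM n (x \<circ> insert_index a) (y \<circ> insert_index a)"
      by (rule eq_matI) (auto simp: mat_delete_def B_def MM_def insert_index_def)
    then show "B $$ (a,n) * cofactor B a n = (\<Prod>b<Suc n. (x a - y b)) *
     ((-1)^(a+n) * det (MM n (x \<circ> insert_index a) (y \<circ> insert_index a)))"
      using a by (simp add: cofactor_def B_def)
  qed
  finally show ?thesis unfolding A_def .
qed

lemma perm_insert_lt: "i' < n \<Longrightarrow> permutation_insert n a q i' = insert_index a (q i')"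
  by (simp add: permutation_insert_def insert_dom_def insert_ran_def)

lemma rhs_step:
  fixes x y :: "nat \<Rightarrow> 'a::comm_ring_1"
  shows "RR (Suc n) x y = (\<Sum>a<Suc n. (\<Prod>b<Suc n. (x a - y b)) *
     ((-1)^(a+n) * RR n (x \<circ> insert_index a) (y \<circ> insert_index a)))"
proof -
  define N where "N = {0..<Suc n}"
  define Q where "Q = {q. q permutes {0..<n}}"
  define h where "h = (\<lambda>p. signof p * (\<Prod>j\<in>{0..<Suc n}. \<Prod>i\<in>{0..j}. (x (p j) - y (p i))) :: 'a)"
  have PS: "{p. p permutes N} = (\<Union>a\<in>N. permutation_insert n a ` Q)"
  proof -
    have "{p. p permutes N} = (\<Union>a\<in>N. {p. p permutes N \<and> p n = a})"
      using permutes_in_image[of _ N n] by (auto simp: N_def)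
    also have "\<dots> = (\<Union>a\<in>N. permutation_insert n a ` Q)"
      unfolding Q_def N_def using permutation_fix[of n n] by auto
    finally show ?thesis .
  qed
  have "RR (Suc n) x y = sum h {p. p permutes N}" by (simp add: RR_def h_def N_def)
  also have "\<dots> = (\<Sum>a\<in>N. sum h (permutation_insert n a ` Q))"
    unfolding PS
  proof (rule sum.UNION_disjoint)
    show "finite N" by (simp add: N_def)
    show "\<forall>a\<in>N. finite (permutation_insert n a ` Q)"
      unfolding Q_def using finite_permutations[of "{0..<n}"] by auto
    show "\<forall>a\<in>N. \<forall>b\<in>N. a \<noteq> b \<longrightarrow> permutation_insert n a ` Q \<inter> permutation_insert n b ` Q = {}"
      by (auto dest: fun_cong[where x=n])
  qed
  also have "\<dots> = (\<Sum>a<Suc n. (\<Prod>b<Suc n. (x a - y b)) *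
     ((-1)^(a+n) * RR n (x \<circ> insert_index a) (y \<circ> insert_index a)))"
    unfolding N_def atLeast0LessThan
  proof (rule sum.cong[OF refl])
    fix a assume a: "a \<in> {..<Suc n}"
    have "sum h (permutation_insert n a ` Q) = sum (h \<circ> permutation_insert n a) Q"
      by (rule sum.reindex) (use permutation_insert_inj_on[of n n a] a in \<open>auto simp: Q_def\<close>)
    also have "\<dots> = (\<Sum>q\<in>Q. (\<Prod>b<Suc n. (x a - y b)) * ((-1)^(a+n) * (signof q *
       (\<Prod>j\<in>{0..<n}. \<Prod>i\<in>{0..j}. ((x \<circ> insert_index a) (q j) - (y \<circ> insert_index a) (q i))))))"
    proof (rule sum.cong[OF refl])
      fix q assume "q \<in> Q"
      hence q: "q permutes {0..<n}" by (simp add: Q_def)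
      let ?p = "permutation_insert n a q"
      have pp: "?p permutes {0..<Suc n}" using permutation_insert_permutes[OF q, of n a] a by simp
      have sg: "signof ?p = (-1::'a)^(n+a) * signof q"
        using signof_permutation_insert[OF q, of n a] a by simp
      have last: "(\<Prod>i\<in>{0..n}. (x (?p n) - y (?p i))) = (\<Prod>b<Suc n. (x a - y b))"
      proof -
        have "(\<Prod>i\<in>{0..n}. (x (?p n) - y (?p i))) = (\<Prod>i\<in>{0..<Suc n}. ((\<lambda>b. x a - y b) \<circ> ?p) i)"
          by (simp add: atLeastLessThanSuc_atLeastAtMost)
        also have "\<dots> = (\<Prod>b\<in>{0..<Suc n}. x a - y b)"
          by (rule prod.permute[OF pp, symmetric])
        finally show ?thesis by (simp add: atLeast0LessThan)
      qed
      have rest: "(\<Prod>j\<in>{0..<n}. \<Prod>i\<in>{0..j}. (x (?p j) - y (?p i))) =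
          (\<Prod>j\<in>{0..<n}. \<Prod>i\<in>{0..j}. ((x \<circ> insert_index a) (q j) - (y \<circ> insert_index a) (q i)))"
        by (rule prod.cong[OF refl], rule prod.cong[OF refl]) (auto simp: perm_insert_lt)
      have "(h \<circ> permutation_insert n a) q = signof ?p * ((\<Prod>j\<in>{0..<n}. \<Prod>i\<in>{0..j}. (x (?p j) - y (?p i))) * (\<Prod>i\<in>{0..n}. (x (?p n) - y (?p i))))"
        unfolding h_def by (simp add: prod.atLeast0_lessThan_Suc)
      also have "\<dots> = (\<Prod>b<Suc n. (x a - y b)) * ((-1)^(a+n) * (signof q *
       (\<Prod>j\<in>{0..<n}. \<Prod>i\<in>{0..j}. ((x \<circ> insert_index a) (q j) - (y \<circ> insert_index a) (q i)))))"
        unfolding sg last rest by (simp add: add.commute mult_ac)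
      finally show "(h \<circ> permutation_insert n a) q = (\<Prod>b<Suc n. (x a - y b)) * ((-1)^(a+n) * (signof q *
       (\<Prod>j\<in>{0..<n}. \<Prod>i\<in>{0..j}. ((x \<circ> insert_index a) (q j) - (y \<circ> insert_index a) (q i)))))" .
    qed
    also have "\<dots> = (\<Prod>b<Suc n. (x a - y b)) * ((-1)^(a+n) * RR n (x \<circ> insert_index a) (y \<circ> insert_index a))"
      by (simp add: RR_def Q_def sum_distrib_left)
    finally show "sum h (permutation_insert n a ` Q) = (\<Prod>b<Suc n. (x a - y b)) * ((-1)^(a+n) * RR n (x \<circ> insert_index a) (y \<circ> insert_index a))" .
  qed
  finally show ?thesis .
qed

lemma gen: "det (MM n x y) = RR n x y"
proof (induction n arbitrary: x y)
  case 0
  have "{p. p permutes {0..<0::nat}} = {id}" by auto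
  then show ?case by (simp add: RR_def MM_def)
next
  case (Suc n)
  then show ?case by (simp add: det_step rhs_step comp_def)
qed


theorem mainTheorem10:
  fixes n :: nat and x y :: "nat \<Rightarrow> 'a :: comm_ring_1"
  assumes "n \<ge> 1"
  shows "det (mat n n (\<lambda>(i, j). x i ^ (j + 1) - y i ^ (j + 1))) =
    (\<Sum>p | p permutes {0..<n}. signof p *
       (\<Prod>j\<in>{0..<n}. \<Prod>i\<in>{0..j}. (x (p j) - y (p i))))"
  using gen[of n x y] unfolding MM_def RR_def .

end
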